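(* Let $m>2$ be an odd integer, $n\ge 1$ an integer, and let $M_{2mn}=\langle a,b : a^m=b^{2n}=1,\ bab^{-1}=a^{-1}\rangle$ be the metacyclic group of order $2mn$. Let $\Gamma_{M_{2mn}}$ be its non-commuting graph. Then the spectrum of the distance matrix $D(\Gamma_{M_{2mn}})$ (eigenvalues counted with multiplicity, multiplicities being added if two of the listed values coincide) consists of: (a) $-2$ with multiplicity $2mn-(m+n)-1$; (b) $n-2$ with multiplicity $m-1$; (c) $\frac{-(4+n-3mn)+n\sqrt{5m^2-10m+9}}{2}$ and $\frac{-(4+n-3mn)-n\sqrt{5m^2-10m+9}}{2}$, each with multiplicity $1$.
   Context: For a finite non-abelian group $G$ with centre $Z(G)$, the non-commuting graph $\Gamma_G$ is the simple undirected graph with vertex set $G\setminus Z(G)$, in which two distinct vertices $u,v$ are adjacent if and only if $uv\ne vu$. For a connected graph $H$, $d_{uv}$ denotes the length of a shortest path between vertices $u$ and $v$, and the distance matrix $D(H)$ is the matrix whose $(u,v)$-entry is $d_{uv}$. *)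

theory Defs
  imports "HOL-Algebra.Algebra" "Jordan_Normal_Form.Char_Poly"
begin

definition grp_centre :: "('a, 'b) monoid_scheme \<Rightarrow> 'a set" where
  "grp_centre G = {z \<in> carrier G. \<forall>x \<in> carrier G. z \<otimes>\<^bsub>G\<^esub> x = x \<otimes>\<^bsub>G\<^esub> z}"

definition nc_vertices :: "('a, 'b) monoid_scheme \<Rightarrow> 'a set" where
  "nc_vertices G = carrier G - grp_centre G"

definition nc_adj :: "('a, 'b) monoid_scheme \<Rightarrow> 'a \<Rightarrow> 'a \<Rightarrow> bool" where
  "nc_adj G u v \<longleftrightarrow> u \<in> nc_vertices G \<and> v \<in> nc_vertices G \<and> u \<noteq> v
     \<and> u \<otimes>\<^bsub>G\<^esub> v \<noteq> v \<otimes>\<^bsub>G\<^esub> u"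

definition nc_walk :: "('a, 'b) monoid_scheme \<Rightarrow> 'a list \<Rightarrow> 'a \<Rightarrow> 'a \<Rightarrow> bool" where
  "nc_walk G p u v \<longleftrightarrow> p \<noteq> [] \<and> hd p = u \<and> last p = v \<and> set p \<subseteq> nc_vertices G
     \<and> (\<forall>i < length p - 1. nc_adj G (p ! i) (p ! Suc i))"

text \<open>Distance: length (number of edges) of a shortest walk (equivalently path) from u to v.\<close>
definition nc_dist :: "('a, 'b) monoid_scheme \<Rightarrow> 'a \<Rightarrow> 'a \<Rightarrow> nat" where
  "nc_dist G u v = (LEAST k. \<exists>p. nc_walk G p u v \<and> length p = Suc k)"

definition nc_distance_matrix :: "('a, 'b) monoid_scheme \<Rightarrow> (nat \<Rightarrow> 'a) \<Rightarrow> real mat" where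
  "nc_distance_matrix G f =
     mat (card (nc_vertices G)) (card (nc_vertices G)) (\<lambda>(i, j). real (nc_dist G (f i) (f j)))"

end

theory Submission
  imports Defs
begin

lemma signof_sq: "(signof p :: 'a::comm_ring_1) * signof p = 1"
  by (cases p rule: sign_cases) auto

lemma det_perm_both:
  fixes C :: "'a::comm_ring_1 mat"
  assumes C: "C \<in> carrier_mat n n" and p: "p permutes {0..<n}"
  shows "det (mat n n (\<lambda>(i,j). C $$ (p i, p j))) = det C"
proof -
  have pl: "\<And>i. i < n \<Longrightarrow> p i < n" using p by (simp add: permutes_in_image)
  define C1 where "C1 = mat n n (\<lambda>(i,j). C $$ (i, p j))"
  have C1: "C1 \<in> carrier_mat n n" unfolding C1_def by simp
  have e1: "mat n n (\<lambda>(i,j). C $$ (p i, p j)) = mat n n (\<lambda>(i,j). C1 $$ (p i, j))"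
    by (rule eq_matI, auto simp: C1_def pl)
  have e2: "transpose_mat C1 = mat n n (\<lambda>(i,j). transpose_mat C $$ (p i, j))"
    by (rule eq_matI, insert C, auto simp: C1_def pl)
  have "det C1 = det (transpose_mat C1)" using det_transpose[OF C1] by simp
  also have "\<dots> = signof p * det (transpose_mat C)"
    unfolding e2 by (rule det_permute_rows[OF _ p], insert C, auto)
  also have "\<dots> = signof p * det C" using det_transpose[OF C] by simp
  finally have d1: "det C1 = signof p * det C" .
  show ?thesis unfolding e1 det_permute_rows[OF C1 p] d1
    by (simp add: mult.assoc[symmetric] signof_sq)
qed

lemma char_poly_perm:
  fixes A :: "'a::comm_ring_1 mat"
  assumes A: "A \<in> carrier_mat n n" and p: "p permutes {0..<n}"
  shows "char_poly (mat n n (\<lambda>(i,j). A $$ (p i, p j))) = char_poly A"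
proof -
  have pl: "\<And>i. i < n \<Longrightarrow> p i < n" using p by (simp add: permutes_in_image)
  have pinj: "\<And>i j. p i = p j \<longleftrightarrow> i = j" using p by (metis permutes_inj injD)
  have "char_poly_matrix (mat n n (\<lambda>(i,j). A $$ (p i, p j))) =
        mat n n (\<lambda>(i,j). char_poly_matrix A $$ (p i, p j))"
    by (rule eq_matI, insert A, auto simp: char_poly_matrix_def pl pinj)
  then show ?thesis unfolding char_poly_def
    using det_perm_both[OF char_poly_matrix_closed[OF A] p] by simp
qed

lemma block_reduce:
  fixes A :: "'a::field mat" and K R :: nat and \<rho> :: "nat \<Rightarrow> nat" and lam :: 'a
  assumes A: "A \<in> carrier_mat (K+R) (K+R)"
  and rho: "\<And>i. K \<le> i \<Longrightarrow> i < K+R \<Longrightarrow> \<rho> i < K"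
  and col: "\<And>j i. j < K+R \<Longrightarrow> K \<le> i \<Longrightarrow> i < K+R \<Longrightarrow>
     A $$ (j,i) - A $$ (j, \<rho> i) = lam * ((if j = i then 1 else 0) - (if j = \<rho> i then 1 else 0))"
  shows "char_poly A = char_poly (mat K K (\<lambda>(k,l). A $$ (k,l) +
      (\<Sum>t\<in>{t\<in>{0..<K+R}. K \<le> t \<and> \<rho> t = k}. A $$ (t,l)))) * [:-lam,1:]^R"
proof -
  define N where "N = K + R"
  define S where "S k = {t\<in>{0..<N}. K \<le> t \<and> \<rho> t = k}" for k
  define P where "P = mat N N (\<lambda>(t,c). (if t = c then 1 else 0) - (if K \<le> c \<and> t = \<rho> c then 1 else (0::'a)))"
  define Pi where "Pi = mat N N (\<lambda>(t,c). (if t = c then 1 else 0) + (if K \<le> c \<and> t = \<rho> c then 1 else (0::'a)))"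
  have AN: "A \<in> carrier_mat N N" using A N_def by simp
  have PN: "P \<in> carrier_mat N N" and PiN: "Pi \<in> carrier_mat N N" unfolding P_def Pi_def by auto
  have rhoN: "\<And>i. K \<le> i \<Longrightarrow> i < N \<Longrightarrow> \<rho> i < K" using rho N_def by auto
  have PPi: "P * Pi = 1\<^sub>m N"
  proof (rule eq_matI)
    fix r c assume r: "r < dim_row (1\<^sub>m N)" and c: "c < dim_col (1\<^sub>m N)"
    let ?b = "if K \<le> c \<and> r = \<rho> c then 1 else (0::'a)"
    have "(P * Pi) $$ (r,c) = (\<Sum>t\<in>{0..<N}. P $$ (r,t) * Pi $$ (t,c))"
      using r c PN PiN by (auto simp: scalar_prod_def)
    also have "\<dots> = (\<Sum>t\<in>{0..<N}. (if t = c then (if r = c then 1 else 0) - ?b else 0) + (if t = r then ?b else 0))"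
    proof (rule sum.cong[OF refl])
      fix t assume t: "t \<in> {0..<N}"
      show "P $$ (r,t) * Pi $$ (t,c) = (if t = c then (if r = c then 1 else 0) - ?b else 0) + (if t = r then ?b else 0)"
        using t r c rhoN[of t] rhoN[of c] unfolding P_def Pi_def by auto
    qed
    also have "\<dots> = 1\<^sub>m N $$ (r,c)" using r c by (simp add: sum.distrib)
    finally show "(P * Pi) $$ (r,c) = 1\<^sub>m N $$ (r,c)" .
  qed (insert PN PiN, auto)
  have PiP: "Pi * P = 1\<^sub>m N"
  proof (rule eq_matI)
    fix r c assume r: "r < dim_row (1\<^sub>m N)" and c: "c < dim_col (1\<^sub>m N)"
    let ?b = "if K \<le> c \<and> r = \<rho> c then 1 else (0::'a)"
    have "(Pi * P) $$ (r,c) = (\<Sum>t\<in>{0..<N}. Pi $$ (r,t) * P $$ (t,c))"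
      using r c PN PiN by (auto simp: scalar_prod_def)
    also have "\<dots> = (\<Sum>t\<in>{0..<N}. (if t = c then (if r = c then 1 else 0) + ?b else 0) - (if t = r then ?b else 0))"
    proof (rule sum.cong[OF refl])
      fix t assume t: "t \<in> {0..<N}"
      show "Pi $$ (r,t) * P $$ (t,c) = (if t = c then (if r = c then 1 else 0) + ?b else 0) - (if t = r then ?b else 0)"
        using t r c rhoN[of t] rhoN[of c] unfolding P_def Pi_def by auto
    qed
    also have "\<dots> = 1\<^sub>m N $$ (r,c)" using r c by (simp add: sum_subtractf)
    finally show "(Pi * P) $$ (r,c) = 1\<^sub>m N $$ (r,c)" .
  qed (insert PN PiN, auto)
  define B where "B = Pi * A"
  have BN: "B \<in> carrier_mat N N" unfolding B_def using PiN AN by auto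
  have Bent: "B $$ (j,l) = A $$ (j,l) + (\<Sum>t\<in>S j. A $$ (t,l))" if j: "j < N" and l: "l < N" for j l
  proof -
    have "B $$ (j,l) = (\<Sum>t\<in>{0..<N}. Pi $$ (j,t) * A $$ (t,l))"
      using j l PiN AN by (auto simp: B_def scalar_prod_def)
    also have "\<dots> = (\<Sum>t\<in>{0..<N}. (if t = j then A $$ (t,l) else 0) + (if K \<le> t \<and> \<rho> t = j then A $$ (t,l) else 0))"
      by (rule sum.cong[OF refl], insert j, auto simp: Pi_def)
    also have "\<dots> = A $$ (j,l) + (\<Sum>t\<in>S j. A $$ (t,l))"
    proof -
      have "(\<Sum>t\<in>S j. A $$ (t,l)) = (\<Sum>t\<in>{0..<N}. if K \<le> t \<and> \<rho> t = j then A $$ (t,l) else 0)"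
        unfolding S_def by (rule sum.inter_filter) simp
      then show ?thesis using j by (simp add: sum.distrib)
    qed
    finally show ?thesis .
  qed
  define T where "T = B * P"
  have TN: "T \<in> carrier_mat N N" unfolding T_def using BN PN by auto
  have Tent1: "T $$ (j,c) = B $$ (j,c) - (if K \<le> c then B $$ (j, \<rho> c) else 0)" if j: "j < N" and c: "c < N" for j c
  proof -
    have "T $$ (j,c) = (\<Sum>t\<in>{0..<N}. B $$ (j,t) * P $$ (t,c))"
      using j c BN PN by (auto simp: T_def scalar_prod_def)
    also have "\<dots> = (\<Sum>t\<in>{0..<N}. (if t = c then B $$ (j,t) else 0) - (if t = \<rho> c then (if K \<le> c then B $$ (j,t) else 0) else 0))"
      by (rule sum.cong[OF refl], insert c, auto simp: P_def)
    also have "\<dots> = B $$ (j,c) - (if K \<le> c then B $$ (j, \<rho> c) else 0)"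
      using c rhoN[of c] N_def by (cases "K \<le> c") (auto simp: sum_subtractf)
    finally show ?thesis .
  qed
  define Q where "Q = mat K K (\<lambda>(k,l). A $$ (k,l) + (\<Sum>t\<in>S k. A $$ (t,l)))"
  define Xm where "Xm = mat R K (\<lambda>(i,l). A $$ (K+i,l))"
  define Dl where "Dl = mat R R (\<lambda>(i,j). if i = j then lam else 0)"
  have Sempty: "S j = {}" if "K \<le> j" for j using rhoN that unfolding S_def by force
  have T4: "T = four_block_mat Q (0\<^sub>m K R) Xm Dl"
  proof (rule eq_matI)
    fix j c assume j: "j < dim_row (four_block_mat Q (0\<^sub>m K R) Xm Dl)"
      and c: "c < dim_col (four_block_mat Q (0\<^sub>m K R) Xm Dl)"
    have jN: "j < N" and cN: "c < N" using j c by (auto simp: Q_def Dl_def N_def)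
    show "T $$ (j,c) = four_block_mat Q (0\<^sub>m K R) Xm Dl $$ (j,c)"
    proof (cases "c < K")
      case True
      then show ?thesis using jN cN Tent1 Bent Sempty[of j]
        by (auto simp: Q_def Xm_def Dl_def N_def)
    next
      case False
      have sd: "(\<Sum>t\<in>S j. A $$ (t,c)) - (\<Sum>t\<in>S j. A $$ (t,\<rho> c)) = (if \<rho> c = j then lam else 0)"
      proof -
        have "(\<Sum>t\<in>S j. A $$ (t,c)) - (\<Sum>t\<in>S j. A $$ (t,\<rho> c)) = (\<Sum>t\<in>S j. A $$ (t,c) - A $$ (t,\<rho> c))"
          by (simp add: sum_subtractf)
        also have "\<dots> = (\<Sum>t\<in>S j. if t = c then lam else 0)"
          by (rule sum.cong[OF refl], insert False cN rhoN[of c], auto simp: S_def N_def col)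
        also have "\<dots> = (if \<rho> c = j then lam else 0)"
          using False cN by (auto simp: S_def)
        finally show ?thesis .
      qed
      have "T $$ (j,c) = (A $$ (j,c) - A $$ (j,\<rho> c)) + ((\<Sum>t\<in>S j. A $$ (t,c)) - (\<Sum>t\<in>S j. A $$ (t,\<rho> c)))"
        using Tent1[OF jN cN] Bent[OF jN cN] Bent[OF jN, of "\<rho> c"] False cN rhoN[of c] N_def
        by (simp add: algebra_simps)
      also have "\<dots> = (if j = c then lam else 0)"
        unfolding sd using col[of j c] jN cN False N_def by (auto simp: algebra_simps)
      finally show ?thesis using False jN cN
        by (auto simp: Q_def Xm_def Dl_def N_def)
    qed
  qed (insert TN, auto simp: Q_def Dl_def N_def)
  have sim: "similar_mat A T"
    unfolding similar_mat_def
  proof (intro exI)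
    have "P * T * Pi = P * (Pi * A * P) * Pi" unfolding T_def B_def by simp
    also have "\<dots> = (P * Pi) * A * (P * Pi)"
      using PN PiN AN by (simp add: assoc_mult_mat[of _ N N _ N _ N])
    also have "\<dots> = A" using PPi AN by simp
    finally show "similar_mat_wit A T P Pi"
      unfolding similar_mat_wit_def Let_def using AN TN PN PiN PPi PiP by auto
  qed
  have cpm: "char_poly_matrix T = four_block_mat (char_poly_matrix Q) (0\<^sub>m K R)
      (map_mat (\<lambda>a. [:-a:]) Xm) (char_poly_matrix Dl)"
    unfolding T4 by (rule eq_matI, auto simp: char_poly_matrix_def Q_def Xm_def Dl_def)
  have cQ: "char_poly_matrix Q \<in> carrier_mat K K" and cD: "char_poly_matrix Dl \<in> carrier_mat R R"
    by (auto simp: Q_def Dl_def)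
  have "char_poly T = char_poly Q * char_poly Dl"
    unfolding char_poly_def cpm
    by (rule det_four_block_mat_upper_right_zero[OF cQ refl _ cD], auto simp: Xm_def)
  moreover have "char_poly Dl = [:-lam,1:]^R"
  proof -
    have ut: "upper_triangular Dl" by (auto simp: Dl_def upper_triangular_def)
    have DlR: "Dl \<in> carrier_mat R R" by (simp add: Dl_def)
    have "char_poly Dl = (\<Prod>a\<leftarrow>diag_mat Dl. [:- a, 1:])"
      by (rule char_poly_upper_triangular[OF DlR ut])
    also have "diag_mat Dl = replicate R lam"
      by (auto simp: diag_mat_def Dl_def intro: nth_equalityI)
    finally show ?thesis by (simp add: prod_list_replicate)
  qed
  ultimately show ?thesis using char_poly_similar[OF sim] unfolding Q_def S_def N_def by simp
qed

lemma det2: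
  fixes g :: "nat \<times> nat \<Rightarrow> 'a::comm_ring_1"
  shows "det (mat 2 2 g) = g (0,0) * g (1,1) - g (0,1) * g (1,0)"
proof -
  have A: "mat 2 2 g \<in> carrier_mat 2 2" by simp
  have "det (mat 2 2 g) = (\<Sum>i<2. mat 2 2 g $$ (i,0) * cofactor (mat 2 2 g) i 0)"
    by (rule laplace_expansion_column[OF A], simp)
  also have "\<dots> = g (0,0) * cofactor (mat 2 2 g) 0 0 + g (1,0) * cofactor (mat 2 2 g) 1 0"
    by (simp add: numeral_2_eq_2)
  also have "cofactor (mat 2 2 g) 0 0 = g (1,1)"
    unfolding cofactor_def by (subst det_single, auto simp: mat_delete_def)
  also have "cofactor (mat 2 2 g) 1 0 = - g (0,1)"
    unfolding cofactor_def by (subst det_single, auto simp: mat_delete_def)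
  finally show ?thesis by (simp add: algebra_simps)
qed

lemma char_poly2:
  fixes g :: "nat \<times> nat \<Rightarrow> 'a::comm_ring_1"
  shows "char_poly (mat 2 2 g) = [: g (0,0) * g (1,1) - g (0,1) * g (1,0), - (g (0,0) + g (1,1)), 1:]"
proof -
  have "char_poly_matrix (mat 2 2 g) = mat 2 2 (\<lambda>(i,j). (if i = j then [:0,1:] else 0) + [:- g (i,j):])"
    by (rule eq_matI, auto simp: char_poly_matrix_def)
  then have "char_poly (mat 2 2 g) = ([:- g (0,0):] + [:0,1:]) * ([:- g (1,1):] + [:0,1:]) - [:- g (0,1):] * [:- g (1,0):]"
    unfolding char_poly_def by (simp add: det2)
  then show ?thesis by (simp add: algebra_simps)
qed

lemma final_poly:
  fixes m n :: real
  assumes "m > 2"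
  shows "[: 2*((m-1)*n - 1) * (2*(n-1) + (m-1)*n) - (m-1)*n * (n + (m-1)*n),
     - (2*((m-1)*n - 1) + (2*(n-1) + (m-1)*n)), 1:] =
    [:- ((- (4 + n - 3 * m * n) + n * sqrt (5 * m\<^sup>2 - 10 * m + 9)) / 2), 1:]
    * [:- ((- (4 + n - 3 * m * n) - n * sqrt (5 * m\<^sup>2 - 10 * m + 9)) / 2), 1:]"
proof -
  have pos: "5 * m\<^sup>2 - 10 * m + 9 \<ge> 0" 
  proof -
    have "5 * m\<^sup>2 - 10 * m + 9 = 5 * (m-1)\<^sup>2 + 4" by (simp add: power2_eq_square algebra_simps)
    then show ?thesis by (smt (verit) zero_le_power2)
  qed
  define s where "s = sqrt (5 * m\<^sup>2 - 10 * m + 9)"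
  have s2: "s * s = 5 * m\<^sup>2 - 10 * m + 9" unfolding s_def using pos
    by (simp add: real_sqrt_mult_self)
  show ?thesis unfolding s_def[symmetric]
    by (simp add: algebra_simps power2_eq_square s2 field_simps)
qed

lemma graph_charpoly:
  fixes V :: "'a set" and d :: "'a \<Rightarrow> 'a \<Rightarrow> nat" and col :: "'a \<Rightarrow> nat"
    and r :: "nat \<Rightarrow> 'a" and f :: "nat \<Rightarrow> 'a" and m n :: nat
  assumes fin: "finite V" and f: "bij_betw f {0..<card V} V"
  and d: "\<And>u v. u \<in> V \<Longrightarrow> v \<in> V \<Longrightarrow> d u v = (if u = v then 0 else if col u = col v then 2 else 1)"
  and r: "\<And>k. k \<le> m \<Longrightarrow> r k \<in> V" and rc: "\<And>k. k \<le> m \<Longrightarrow> col (r k) = k"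
  and colV: "\<And>v. v \<in> V \<Longrightarrow> col v \<le> m"
  and c0: "card {v\<in>V. col v = 0} = (m-1)*n"
  and ck: "\<And>k. 1 \<le> k \<Longrightarrow> k \<le> m \<Longrightarrow> card {v\<in>V. col v = k} = n"
  and m: "m > 2" and n: "n \<ge> 1"
  shows "char_poly (mat (card V) (card V) (\<lambda>(i,j). real (d (f i) (f j)))) =
    [: 2*((real m-1)*real n - 1) * (2*(real n-1) + (real m-1)*real n) - (real m-1)*real n * (real n + (real m-1)*real n),
     - (2*((real m-1)*real n - 1) + (2*(real n-1) + (real m-1)*real n)), 1:]
    * [:-(real n - 2),1:]^(m-1) * [:2,1:]^(card V - (m+1))"
proof -
  define N where "N = card V"
  define K where "K = m + 1"
  define pc where "pc k = card {v\<in>V. col v = k}" for k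
  have rinj: "inj_on r {0..<K}"
  proof (rule inj_onI)
    fix x y assume "x \<in> {0..<K}" "y \<in> {0..<K}" "r x = r y"
    then have "x \<le> m" "y \<le> m" "r x = r y" using K_def by auto
    then show "x = y" using rc[of x] rc[of y] by metis
  qed
  have rV: "r ` {0..<K} \<subseteq> V" using r K_def by auto
  have cardR: "card (r ` {0..<K}) = K" using card_image[OF rinj] by simp
  have KN: "K \<le> N" using card_mono[OF fin rV] cardR N_def by simp
  define W where "W = V - r ` {0..<K}"
  have finW: "finite W" using fin W_def by simp
  have cardW: "card W = N - K" unfolding W_def N_def using card_Diff_subset[OF _ rV] cardR fin
    by (simp add: finite_subset)
  obtain g where g: "bij_betw g {0..<card W} W" using ex_bij_betw_nat_finite[OF finW] by blast
  define h where "h i = (if i < K then r i else g (i - K))" for i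
  have hV: "h i \<in> V" if "i < N" for i
  proof (cases "i < K")
    case True then show ?thesis using rV h_def by auto
  next
    case False
    then have "i - K < card W" using that cardW by simp
    then have "g (i - K) \<in> W" using g by (auto simp: bij_betw_def)
    then show ?thesis using False h_def W_def by auto
  qed
  have hinj: "inj_on h {0..<N}"
  proof (rule inj_onI)
    fix i j assume i: "i \<in> {0..<N}" and j: "j \<in> {0..<N}" and e: "h i = h j"
    show "i = j"
    proof (cases "i < K"; cases "j < K")
      assume "i < K" "j < K" then show ?thesis using e rinj h_def by (auto dest: inj_onD)
    next
      assume a: "i < K" "\<not> j < K"
      then have "g (j - K) \<in> W" using j cardW g by (auto simp: bij_betw_def)
      moreover have "h i \<in> r ` {0..<K}" "h j = g (j-K)" using a h_def by auto
      ultimately show ?thesis using e W_def by auto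
    next
      assume a: "\<not> i < K" "j < K"
      then have "g (i - K) \<in> W" using i cardW g by (auto simp: bij_betw_def)
      moreover have "h j \<in> r ` {0..<K}" "h i = g (i-K)" using a h_def by auto
      ultimately show ?thesis using e W_def by auto
    next
      assume a: "\<not> i < K" "\<not> j < K"
      then have "i - K = j - K" using e h_def i j cardW bij_betw_imp_inj_on[OF g]
        by (auto dest!: inj_onD)
      then show ?thesis using a by simp
    qed
  qed
  have himg: "h ` {0..<N} = V"
  proof
    show "h ` {0..<N} \<subseteq> V" using hV by auto
    show "V \<subseteq> h ` {0..<N}"
    proof
      fix v assume v: "v \<in> V"
      show "v \<in> h ` {0..<N}"
      proof (cases "v \<in> r ` {0..<K}")
        case True
        then obtain k where "k < K" "v = r k" by auto
        then show ?thesis using KN h_def by (auto intro!: image_eqI[of _ _ k])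
      next
        case False
        then have "v \<in> W" using v W_def by auto
        then obtain t where t: "t < card W" "v = g t" using g unfolding bij_betw_def by (metis atLeastLessThan_iff imageE)
        then have "h (t + K) = v" using h_def by simp
        moreover have "t + K < N" using t cardW KN by simp
        ultimately show ?thesis by force
      qed
    qed
  qed
  have hbij: "bij_betw h {0..<N} V" using hinj himg bij_betw_def by blast
  have hr: "h k = r k" if "k < K" for k using that h_def by simp
  have heq: "h i = h j \<longleftrightarrow> i = j" if "i < N" "j < N" for i j
    using hinj that by (auto dest: inj_onD)
  define hc where "hc i = col (h i)" for i
  have hck: "hc k = k" if "k < K" for k using that hr rc K_def hc_def by simp
  have hcK: "hc i < K" if "i < N" for i using colV[OF hV[OF that]] K_def hc_def by simp
  define \<sigma> where "\<sigma> i = (if i < N then inv_into {0..<N} f (h i) else i)" for i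
  have fN: "bij_betw f {0..<N} V" using f N_def by simp
  have fs: "f (\<sigma> i) = h i" if "i < N" for i
    using that hV fN unfolding \<sigma>_def by (simp add: bij_betw_def f_inv_into_f)
  have sperm: "\<sigma> permutes {0..<N}"
  proof (rule bij_imp_permutes)
    have "bij_betw (inv_into {0..<N} f \<circ> h) {0..<N} {0..<N}"
      by (rule bij_betw_trans[OF hbij bij_betw_inv_into[OF fN]])
    then show "bij_betw \<sigma> {0..<N} {0..<N}"
      by (rule bij_betw_cong[THEN iffD1, rotated], auto simp: \<sigma>_def)
  qed (auto simp: \<sigma>_def)
  have sN: "\<sigma> i < N" if "i < N" for i using sperm that by (simp add: permutes_in_image)
  define Df where "Df = mat N N (\<lambda>(i,j). real (d (f i) (f j)))"
  define Dh where "Dh = mat N N (\<lambda>(i,j). real (d (h i) (h j)))"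
  have DfN: "Df \<in> carrier_mat N N" by (simp add: Df_def)
  have "Dh = mat N N (\<lambda>(i,j). Df $$ (\<sigma> i, \<sigma> j))"
    by (rule eq_matI, auto simp: Dh_def Df_def sN fs)
  then have cp1: "char_poly Df = char_poly Dh" using char_poly_perm[OF DfN sperm] by simp
  have Dhe: "Dh $$ (i,j) = (if i = j then 0 else if hc i = hc j then 2 else 1)" if "i < N" "j < N" for i j
    using that hV heq d by (simp add: Dh_def hc_def)
  define R where "R = N - K"
  have NKR: "N = K + R" using KN R_def by simp
  have DhN: "Dh \<in> carrier_mat (K+R) (K+R)" using NKR by (simp add: Dh_def)
  have step1: "char_poly Dh = char_poly (mat K K (\<lambda>(k,l). Dh $$ (k,l) +
      (\<Sum>t\<in>{t\<in>{0..<K+R}. K \<le> t \<and> hc t = k}. Dh $$ (t,l)))) * [:-(-2),1:]^R"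
  proof (rule block_reduce[OF DhN])
    show "\<And>i. K \<le> i \<Longrightarrow> i < K + R \<Longrightarrow> hc i < K" using hcK NKR by simp
    fix j i assume j: "j < K+R" and i: "K \<le> i" "i < K+R"
    have c: "hc i < K" using hcK i NKR by simp
    show "Dh $$ (j, i) - Dh $$ (j, hc i) = -2 * ((if j = i then 1 else 0) - (if j = hc i then 1 else 0))"
      using Dhe[of j i] Dhe[of j "hc i"] j i c hck[OF c] NKR by auto
  qed
  define S where "S k = {t\<in>{0..<K+R}. K \<le> t \<and> hc t = k}" for k
  have cardS: "card (S k) = pc k - 1" if k: "k < K" for k
  proof -
    have "h ` S k = {v\<in>V. col v = k} - {r k}"
    proof
      show "h ` S k \<subseteq> {v\<in>V. col v = k} - {r k}"
      proof
        fix v assume "v \<in> h ` S k"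
        then obtain t where t: "t < K+R" "K \<le> t" "hc t = k" "v = h t" unfolding S_def by auto
        have tN: "t < N" using t NKR by simp
        then have "h t \<in> V" using hV by simp
        moreover have "h t \<noteq> h k" using heq[of t k] tN t k by auto
        ultimately show "v \<in> {v\<in>V. col v = k} - {r k}" using t hr[OF k] hc_def by auto
      qed
      show "{v\<in>V. col v = k} - {r k} \<subseteq> h ` S k"
      proof
        fix v assume v: "v \<in> {v\<in>V. col v = k} - {r k}"
        then obtain t where t: "t < N" "v = h t" using himg by auto
        have "\<not> t < K"
        proof
          assume tk: "t < K"
          then have "hc t = t" by (rule hck)
          then have "t = k" using v t hc_def by auto
          then show False using v t hr tk by auto
        qed
        then show "v \<in> h ` S k" using t v NKR unfolding S_def hc_def by auto
      qed
    qed
    moreover have "inj_on h (S k)" using hinj NKR unfolding S_def by (auto intro: inj_on_subset)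
    ultimately have "card (S k) = card ({v\<in>V. col v = k} - {r k})" by (metis card_image)
    also have "\<dots> = pc k - 1" using r rc k K_def fin unfolding pc_def by (subst card_Diff_singleton) auto
    finally show ?thesis .
  qed
  define pr where "pr k = real (pc k)" for k
  have pr0: "pr 0 = (real m - 1) * real n" using c0 m unfolding pr_def pc_def by (simp add: of_nat_diff)
  have prk: "pr k = real n" if "1 \<le> k" "k \<le> m" for k using ck that unfolding pr_def pc_def by simp
  have pcpos: "pc k \<ge> 1" if "k < K" for k
  proof -
    have "r k \<in> {v\<in>V. col v = k}" using r rc that K_def by auto
    then have "0 < pc k" unfolding pc_def using fin by (auto simp: card_gt_0_iff)
    then show ?thesis by simp
  qed
  define Q where "Q = mat K K (\<lambda>(k,l). if k = l then 2 * (pr k - 1) else pr k)"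
  have Qeq: "mat K K (\<lambda>(k,l). Dh $$ (k,l) + (\<Sum>t\<in>S k. Dh $$ (t,l))) = Q"
  proof (rule eq_matI)
    fix k l assume k: "k < dim_row Q" and l: "l < dim_col Q"
    have kK: "k < K" and lK: "l < K" using k l by (auto simp: Q_def)
    have "(\<Sum>t\<in>S k. Dh $$ (t,l)) = (\<Sum>t\<in>S k. (if k = l then 2 else 1))"
      by (rule sum.cong[OF refl], insert lK kK NKR hck[OF lK], auto simp: S_def Dhe)
    also have "\<dots> = real (pc k - 1) * (if k = l then 2 else 1)" using cardS[OF kK] by simp
    finally have "(\<Sum>t\<in>S k. Dh $$ (t,l)) = real (pc k - 1) * (if k = l then 2 else 1)" .
    then show "mat K K (\<lambda>(k,l). Dh $$ (k,l) + (\<Sum>t\<in>S k. Dh $$ (t,l))) $$ (k,l) = Q $$ (k,l)"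
      using kK lK NKR hck Dhe[of k l] pcpos[OF kK] by (auto simp: Q_def pr_def of_nat_diff)
  qed (auto simp: Q_def)
  have step1': "char_poly Df = char_poly Q * [:2,1:]^R"
    using cp1 step1 Qeq unfolding S_def by simp
  have K2: "K = 2 + (m-1)" using m K_def by simp
  have QN: "Q \<in> carrier_mat (2 + (m-1)) (2 + (m-1))" using K2 by (simp add: Q_def)
  have step2: "char_poly Q = char_poly (mat 2 2 (\<lambda>(k,l). Q $$ (k,l) +
      (\<Sum>t\<in>{t\<in>{0..<2 + (m-1)}. 2 \<le> t \<and> 1 = k}. Q $$ (t,l)))) * [:-(real n - 2),1:]^(m-1)"
  proof (rule block_reduce[OF QN])
    show "\<And>i. 2 \<le> i \<Longrightarrow> i < 2 + (m - 1) \<Longrightarrow> (1::nat) < 2" by simp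
    fix j i assume j: "j < 2 + (m-1)" and i: "2 \<le> i" "i < 2 + (m-1)"
    have pri: "pr i = real n" using prk[of i] i m by simp
    have pr1: "pr 1 = real n" using prk[of 1] m by simp
    show "Q $$ (j, i) - Q $$ (j, 1) = (real n - 2) * ((if j = i then 1 else 0) - (if j = 1 then 1 else 0))"
      using j i K2 pri pr1 by (auto simp: Q_def algebra_simps)
  qed
  define a00 where "a00 = 2*((real m-1)*real n - 1)"
  define a01 where "a01 = (real m-1)*real n"
  define a10 where "a10 = real n + (real m-1)*real n"
  define a11 where "a11 = 2*(real n-1) + (real m-1)*real n"
  have Q2eq: "mat 2 2 (\<lambda>(k,l). Q $$ (k,l) + (\<Sum>t\<in>{t\<in>{0..<2 + (m-1)}. 2 \<le> t \<and> 1 = k}. Q $$ (t,l)))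
     = mat 2 2 (\<lambda>(k,l). if k = 0 then (if l = 0 then a00 else a01) else (if l = 0 then a10 else a11))"
  proof (rule eq_matI)
    fix k l assume k: "k < dim_row (mat 2 2 (\<lambda>(k,l). if k = 0 then (if l = 0 then a00 else a01) else (if l = 0 then a10 else a11)))"
      and l: "l < dim_col (mat 2 2 (\<lambda>(k,l). if k = 0 then (if l = 0 then a00 else a01) else (if l = 0 then a10 else a11)))"
    have k2: "k < 2" and l2: "l < 2" using k l by auto
    have sum1: "(\<Sum>t\<in>{t\<in>{0..<2 + (m-1)}. 2 \<le> t}. Q $$ (t,l)) = (real m - 1) * real n"
    proof -
      have "(\<Sum>t\<in>{t\<in>{0..<2 + (m-1)}. 2 \<le> t}. Q $$ (t,l)) = (\<Sum>t\<in>{2..<2 + (m-1)}. real n)"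
      proof (rule sum.cong)
        show "{t\<in>{0..<2 + (m-1)}. 2 \<le> t} = {2..<2 + (m-1)}" by auto
        fix t assume t: "t \<in> {2..<2 + (m-1)}"
        then show "Q $$ (t,l) = real n" using l2 K2 prk[of t] by (auto simp: Q_def)
      qed
      also have "\<dots> = (real m - 1) * real n" using m by (simp add: of_nat_diff)
      finally show ?thesis .
    qed
    have pr1: "pr 1 = real n" using prk[of 1] m by simp
    show "mat 2 2 (\<lambda>(k,l). Q $$ (k,l) + (\<Sum>t\<in>{t\<in>{0..<2 + (m-1)}. 2 \<le> t \<and> 1 = k}. Q $$ (t,l))) $$ (k,l)
      = mat 2 2 (\<lambda>(k,l). if k = 0 then (if l = 0 then a00 else a01) else (if l = 0 then a10 else a11)) $$ (k,l)"
    proof (cases "k = 0")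
      case True
      then show ?thesis using k2 l2 K2 pr0 by (auto simp: Q_def a00_def a01_def)
    next
      case False
      then have k1: "k = 1" using k2 by simp
      show ?thesis using k1 l2 K2 sum1 pr1 by (auto simp: Q_def a10_def a11_def)
    qed
  qed auto
  have cpQ2: "char_poly (mat 2 2 (\<lambda>(k,l). if k = 0 then (if l = 0 then a00 else a01) else (if l = 0 then a10 else a11)))
     = [: a00 * a11 - a01 * a10, - (a00 + a11), 1:]"
    by (subst char_poly2, simp)
  show ?thesis
    using step1' step2 Q2eq cpQ2 unfolding Df_def N_def[symmetric] R_def K_def
    by (simp add: a00_def a01_def a10_def a11_def)
qed

lemma nc_dist_formula:
  fixes G :: "('a,'b) monoid_scheme" and col :: "'a \<Rightarrow> nat"
  assumes adj: "\<And>u v. nc_adj G u v \<longleftrightarrow> u \<in> nc_vertices G \<and> v \<in> nc_vertices G \<and> col u \<noteq> col v"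
    and other: "\<And>u. u \<in> nc_vertices G \<Longrightarrow> \<exists>w \<in> nc_vertices G. col w \<noteq> col u"
    and u: "u \<in> nc_vertices G" and v: "v \<in> nc_vertices G"
  shows "nc_dist G u v = (if u = v then 0 else if col u = col v then 2 else 1)"
proof -
  have len1: "hd p = last p" if "length p = Suc 0" for p :: "'a list"
    using that by (cases p) auto
  have len2: "nc_adj G u v" if w1: "nc_walk G p u v" and w2: "length p = Suc (Suc 0)" for p
  proof -
    obtain z1 z2 where p: "p = [z1, z2]" using w2 by (auto simp: length_Suc_conv)
    show ?thesis using w1 unfolding p nc_walk_def by auto
  qed
  show ?thesis
  proof (cases "u = v")
    case True
    have "nc_walk G [u] u v" using True u by (simp add: nc_walk_def)
    then have "(LEAST k. \<exists>p. nc_walk G p u v \<and> length p = Suc k) = 0"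
      by (intro Least_eq_0) auto
    then show ?thesis using True by (simp add: nc_dist_def)
  next
    case False
    note uv = False
    have no0: "\<not> (\<exists>p. nc_walk G p u v \<and> length p = Suc 0)"
      using len1 uv by (auto simp: nc_walk_def)
    show ?thesis
    proof (cases "col u = col v")
      case False
      have "nc_walk G [u, v] u v" using False u v adj[of u v] by (auto simp: nc_walk_def)
      then have "(LEAST k. \<exists>p. nc_walk G p u v \<and> length p = Suc k) = 1"
      proof (intro Least_equality)
        fix y assume "\<exists>p. nc_walk G p u v \<and> length p = Suc y"
        then show "1 \<le> y" using no0 by (cases y) auto
      qed auto
      then show ?thesis using uv False by (simp add: nc_dist_def)
    next
      case True
      obtain w where w: "w \<in> nc_vertices G" "col w \<noteq> col u" using other[OF u] by blast
      have "nc_walk G [u, w, v] u v"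
        unfolding nc_walk_def using u v w True adj[of u w] adj[of w v]
        by (auto simp: less_Suc_eq nth_Cons')
      then have "(LEAST k. \<exists>p. nc_walk G p u v \<and> length p = Suc k) = 2"
      proof (intro Least_equality)
        fix y assume y: "\<exists>p. nc_walk G p u v \<and> length p = Suc y"
        show "2 \<le> y"
        proof (rule ccontr)
          assume "\<not> 2 \<le> y"
          then have "y = 0 \<or> y = 1" by auto
          then show False
          proof
            assume "y = 0" then show False using y no0 by auto
          next
            assume "y = 1"
            then obtain p where "nc_walk G p u v" "length p = Suc (Suc 0)" using y by auto
            then have "nc_adj G u v" by (rule len2)
            then show False using adj True by auto
          qed
        qed
      qed auto
      then show ?thesis using uv True by (simp add: nc_dist_def)
    qed
  qed
qed

lemma pow_m1_dvd:
  fixes m :: nat assumes "m \<ge> 1"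
  shows "int m dvd int ((m-1)^y) - (if even y then 1 else -1)"
proof (induction y)
  case 0 then show ?case by simp
next
  case (Suc y)
  then obtain q where q: "int ((m-1)^y) - (if even y then 1 else -1) = int m * q" by (auto simp: dvd_def)
  have e: "int ((m-1)^Suc y) = (int m - 1) * int ((m-1)^y)" using assms by (simp add: of_nat_diff)
  have "int ((m-1)^Suc y) - (if even (Suc y) then 1 else -1) = int m * ((int m - 1) * q + (if even y then 1 else -1))"
    using q unfolding e by (auto simp: algebra_simps)
  then show ?case by (metis dvd_triv_left)
qed

lemma dvd_two_odd:
  fixes m :: nat and z :: int
  assumes "odd m" "int m dvd 2 * z"
  shows "int m dvd z"
proof -
  obtain q where q: "2 * z = int m * q" using assms(2) by (auto simp: dvd_def)
  have "even (int m * q)" using q by (metis dvd_triv_left)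
  then have "even q" using assms(1) by (simp add: even_mult_iff)
  then obtain q' where "q = 2 * q'" by auto
  then have "z = int m * q'" using q by simp
  then show ?thesis by simp
qed

lemma dvd_small:
  fixes m :: nat and z :: int
  assumes "\<bar>z\<bar> < int m" "int m dvd z"
  shows "z = 0"
proof (rule ccontr)
  assume "z \<noteq> 0"
  then have "\<bar>int m\<bar> \<le> \<bar>z\<bar>" using dvd_imp_le_int assms(2) by blast
  then show False using assms(1) by simp
qed

context group begin

context
  fixes a b :: 'a and m n :: nat
  assumes modd: "odd m" and m2: "m > 2" and n1: "n \<ge> 1"
    and a: "a \<in> carrier G" and b: "b \<in> carrier G"
    and gen: "generate G {a, b} = carrier G"
    and am: "a [^] m = \<one>" and bn: "b [^] (2*n) = \<one>"
    and rel: "b \<otimes> a \<otimes> inv b = inv a"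
    and cardG: "card (carrier G) = 2*m*n"
begin

lemma mg_ba: "b \<otimes> a = inv a \<otimes> b"
proof -
  have "b \<otimes> a = (b \<otimes> a \<otimes> inv b) \<otimes> b" using a b by (simp add: m_assoc)
  then show ?thesis using rel by simp
qed

lemma mg_inva: "inv a = a [^] (m - 1)"
proof (rule inv_equality)
  have "a [^] (m-1) \<otimes> a = a [^] Suc (m-1)" by simp
  also have "\<dots> = \<one>" using m2 am by simp
  finally show "a [^] (m-1) \<otimes> a = \<one>" .
qed (use a in auto)

lemma mg_invb: "inv b = b [^] (2*n - 1)"
proof (rule inv_equality)
  have "b [^] (2*n-1) \<otimes> b = b [^] Suc (2*n-1)" by simp
  also have "\<dots> = \<one>" using n1 bn by simp
  finally show "b [^] (2*n-1) \<otimes> b = \<one>" .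
qed (use b in auto)

lemma mg_b_ak: "b \<otimes> a [^] (k::nat) = a [^] ((m-1)*k) \<otimes> b"
proof (induction k)
  case 0 then show ?case using b by simp
next
  case (Suc k)
  have "b \<otimes> a [^] Suc k = (b \<otimes> a [^] k) \<otimes> a" using a b by (simp add: m_assoc)
  also have "\<dots> = a [^] ((m-1)*k) \<otimes> (b \<otimes> a)" using Suc a b by (simp add: m_assoc)
  also have "\<dots> = a [^] ((m-1)*k) \<otimes> (a [^] (m-1) \<otimes> b)" using mg_ba mg_inva by simp
  also have "\<dots> = a [^] ((m-1)*k + (m-1)) \<otimes> b" using a b by (simp add: m_assoc[symmetric] nat_pow_mult)
  also have "(m-1)*k + (m-1) = (m-1) * Suc k" by simp
  finally show ?case .
qed

lemma mg_bj_ak: "b [^] (j::nat) \<otimes> a [^] (k::nat) = a [^] ((m-1)^j * k) \<otimes> b [^] j"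
proof (induction j arbitrary: k)
  case 0 then show ?case using a by simp
next
  case (Suc j)
  have "b [^] Suc j \<otimes> a [^] k = b [^] j \<otimes> (b \<otimes> a [^] k)" using a b by (simp add: m_assoc)
  also have "\<dots> = (b [^] j \<otimes> a [^] ((m-1)*k)) \<otimes> b" using a b by (simp add: mg_b_ak m_assoc)
  also have "\<dots> = a [^] ((m-1)^j * ((m-1)*k)) \<otimes> b [^] Suc j" using Suc a b by (simp add: m_assoc)
  also have "(m-1)^j * ((m-1)*k) = (m-1)^Suc j * k" by (simp add: algebra_simps)
  finally show ?case .
qed

lemma mg_mult: "(a [^] (x::nat) \<otimes> b [^] (y::nat)) \<otimes> (a [^] (x'::nat) \<otimes> b [^] (y'::nat)) = a [^] (x + (m-1)^y * x') \<otimes> b [^] (y + y')"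
proof -
  have "(a [^] x \<otimes> b [^] y) \<otimes> (a [^] x' \<otimes> b [^] y') = a [^] x \<otimes> (b [^] y \<otimes> a [^] x') \<otimes> b [^] y'"
    using a b by (simp add: m_assoc)
  also have "\<dots> = (a [^] x \<otimes> a [^] ((m-1)^y * x')) \<otimes> (b [^] y \<otimes> b [^] y')"
    using a b by (simp add: mg_bj_ak m_assoc)
  finally show ?thesis using a b by (simp add: nat_pow_mult)
qed

lemma pow_mod_gen: "c \<in> carrier G \<Longrightarrow> c [^] (k::nat) = \<one> \<Longrightarrow> c [^] (i::nat) = c [^] (i mod k)"
proof -
  assume c: "c \<in> carrier G" and ck: "c [^] k = \<one>"
  have "c [^] i = c [^] (k * (i div k)) \<otimes> c [^] (i mod k)"
    using nat_pow_mult[OF c, of "k*(i div k)" "i mod k"] by simp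
  also have "c [^] (k * (i div k)) = (c [^] k) [^] (i div k)" using nat_pow_pow[OF c] by simp
  also have "\<dots> = \<one>" using ck by simp
  also have "\<one> \<otimes> c [^] (i mod k) = c [^] (i mod k)" using c by simp
  finally show ?thesis .
qed

lemma mg_mod: "a [^] (x::nat) \<otimes> b [^] (y::nat) = a [^] (x mod m) \<otimes> b [^] (y mod (2*n))"
  using pow_mod_gen[OF a am, of x] pow_mod_gen[OF b bn, of y] by simp

lemma mg_gen: "g \<in> generate G {a,b} \<Longrightarrow> \<exists>(x::nat) (y::nat). g = a [^] x \<otimes> b [^] y"
proof (induction rule: generate.induct)
  case one
  then show ?case by (intro exI[of _ "0::nat"]) simp
next
  case (incl h)
  then show ?case
  proof
    assume "h = a" then show ?thesis using a by (intro exI[of _ "1::nat"] exI[of _ "0::nat"]) simp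
  next
    assume "h \<in> {b}" then show ?thesis using b by (intro exI[of _ "0::nat"] exI[of _ "1::nat"]) simp
  qed
next
  case (inv h)
  then show ?case
  proof
    assume "h = a" then show ?thesis using a mg_inva by (intro exI[of _ "m-1"] exI[of _ "0::nat"]) simp
  next
    assume "h \<in> {b}" then show ?thesis using b mg_invb by (intro exI[of _ "0::nat"] exI[of _ "2*n-1"]) simp
  qed
next
  case (eng h1 h2)
  then show ?case using mg_mult by blast
qed

abbreviation "mgE \<equiv> (\<lambda>p::nat\<times>nat. a [^] fst p \<otimes> b [^] snd p)"
abbreviation "mgbox \<equiv> {0..<m} \<times> {0..<2*n}"

lemma mg_img: "mgE ` mgbox = carrier G"
proof
  show "mgE ` mgbox \<subseteq> carrier G"
    by (rule image_subsetI) (use a b in simp)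
  show "carrier G \<subseteq> mgE ` mgbox"
  proof
    fix g assume "g \<in> carrier G"
    then have "g \<in> generate G {a,b}" using gen by simp
    then obtain x y where xy: "g = a [^] (x::nat) \<otimes> b [^] (y::nat)" using mg_gen by metis
    then have "g = mgE (x mod m, y mod (2*n))" using mg_mod[of x y] by simp
    moreover have "(x mod m, y mod (2*n)) \<in> mgbox" using m2 n1 by auto
    ultimately show "g \<in> mgE ` mgbox" by (rule rev_image_eqI[rotated])
  qed
qed

lemma mg_inj: "inj_on mgE mgbox"
  by (rule eq_card_imp_inj_on, simp, simp only: mg_img cardG card_cartesian_product, simp)

lemma mg_eq: "a [^] (x::nat) \<otimes> b [^] (y::nat) = a [^] (x'::nat) \<otimes> b [^] (y'::nat) \<longleftrightarrow>
   x mod m = x' mod m \<and> y mod (2*n) = y' mod (2*n)"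
proof
  assume "a [^] x \<otimes> b [^] y = a [^] x' \<otimes> b [^] y'"
  then have "mgE (x mod m, y mod (2*n)) = mgE (x' mod m, y' mod (2*n))" using mg_mod[of x y] mg_mod[of x' y'] by simp
  moreover have "(x mod m, y mod (2*n)) \<in> mgbox" "(x' mod m, y' mod (2*n)) \<in> mgbox" using m2 n1 by auto
  ultimately have "(x mod m, y mod (2*n)) = (x' mod m, y' mod (2*n))"
    by (intro inj_onD[OF mg_inj]) auto
  then show "x mod m = x' mod m \<and> y mod (2*n) = y' mod (2*n)" by simp
next
  assume "x mod m = x' mod m \<and> y mod (2*n) = y' mod (2*n)"
  then show "a [^] x \<otimes> b [^] y = a [^] x' \<otimes> b [^] y'" using mg_mod[of x y] mg_mod[of x' y'] by simp
qed

lemma nat_mod_eq_int_dvd: "(p::nat) mod m = q mod m \<longleftrightarrow> int m dvd int p - int q"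
proof -
  have "p mod m = q mod m \<longleftrightarrow> int (p mod m) = int (q mod m)" by (rule of_nat_eq_iff[symmetric])
  also have "\<dots> \<longleftrightarrow> int p mod int m = int q mod int m" by (simp add: of_nat_mod)
  also have "\<dots> \<longleftrightarrow> int m dvd int p - int q" by (rule mod_eq_dvd_iff)
  finally show ?thesis .
qed

lemma mg_comm:
  "(a [^] (x::nat) \<otimes> b [^] (y::nat)) \<otimes> (a [^] (x'::nat) \<otimes> b [^] (y'::nat)) = (a [^] x' \<otimes> b [^] y') \<otimes> (a [^] x \<otimes> b [^] y)
   \<longleftrightarrow> int m dvd (int x + (if even y then 1 else -1) * int x' - int x' - (if even y' then 1 else -1) * int x)"
proof -
  define sy where "sy = (if even y then 1 else -1 :: int)"
  define sy' where "sy' = (if even y' then 1 else -1 :: int)"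
  obtain q where q0: "int ((m-1)^y) = sy + int m * q"
    using pow_m1_dvd[of m y] m2 unfolding sy_def by (auto simp: dvd_def algebra_simps)
  obtain q' where q0': "int ((m-1)^y') = sy' + int m * q'"
    using pow_m1_dvd[of m y'] m2 unfolding sy'_def by (auto simp: dvd_def algebra_simps)
  have q: "int (m - Suc 0) ^ y = sy + int m * q" using q0 by simp
  have q': "int (m - Suc 0) ^ y' = sy' + int m * q'" using q0' by simp
  have "(a [^] x \<otimes> b [^] y) \<otimes> (a [^] x' \<otimes> b [^] y') = (a [^] x' \<otimes> b [^] y') \<otimes> (a [^] x \<otimes> b [^] y)
     \<longleftrightarrow> (x + (m-1)^y * x') mod m = (x' + (m-1)^y' * x) mod m"
    unfolding mg_mult mg_eq by (simp add: add.commute)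
  also have "\<dots> \<longleftrightarrow> int m dvd (int x + sy * int x' - int x' - sy' * int x) + int m * (q * int x' - q' * int x)"
    unfolding nat_mod_eq_int_dvd by (simp add: q q' algebra_simps)
  also have "\<dots> \<longleftrightarrow> int m dvd (int x + sy * int x' - int x' - sy' * int x)"
    by (simp add: dvd_add_left_iff)
  finally show ?thesis unfolding sy_def sy'_def .
qed

lemma mg_comm_cases:
  assumes xm: "(x::nat) < m" and xm': "(x'::nat) < m"
  shows "(a [^] x \<otimes> b [^] (y::nat)) \<otimes> (a [^] x' \<otimes> b [^] (y'::nat)) = (a [^] x' \<otimes> b [^] y') \<otimes> (a [^] x \<otimes> b [^] y)
   \<longleftrightarrow> (even y \<and> even y') \<or> (even y \<and> odd y' \<and> x = 0) \<or> (odd y \<and> even y' \<and> x' = 0) \<or> (odd y \<and> odd y' \<and> x = x')"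
proof -
  have z: "int m dvd 2 * z \<longleftrightarrow> z = 0" if zl: "\<bar>z\<bar> < int m" for z
  proof
    assume "int m dvd 2 * z"
    then have "int m dvd z" by (rule dvd_two_odd[OF modd])
    then show "z = 0" by (rule dvd_small[OF zl])
  next
    assume "z = 0" then show "int m dvd 2 * z" by simp
  qed
  show ?thesis
  proof (cases "even y"; cases "even y'")
    assume "even y" "even y'" then show ?thesis unfolding mg_comm by simp
  next
    assume yy: "even y" "odd y'"
    have e: "int x + (if even y then 1 else -1) * int x' - int x' - (if even y' then 1 else -1) * int x = 2 * int x"
      using yy by simp
    show ?thesis unfolding mg_comm e using z[of "int x"] xm yy by simp
  next
    assume yy: "odd y" "even y'"
    have e: "int x + (if even y then 1 else -1) * int x' - int x' - (if even y' then 1 else -1) * int x = 2 * (- int x')"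
      using yy by simp
    show ?thesis unfolding mg_comm e using z[of "- int x'"] xm' yy by simp
  next
    assume yy: "odd y" "odd y'"
    have e: "int x + (if even y then 1 else -1) * int x' - int x' - (if even y' then 1 else -1) * int x = 2 * (int x - int x')"
      using yy by simp
    have "\<bar>int x - int x'\<bar> < int m" using xm xm' by simp
    then show ?thesis unfolding mg_comm e using z[of "int x - int x'"] yy by simp
  qed
qed

end
end

context group begin

context
  fixes a b :: 'a and m n :: nat
  assumes modd: "odd m" and m2: "m > 2" and n1: "n \<ge> 1"
    and a: "a \<in> carrier G" and b: "b \<in> carrier G"
    and gen: "generate G {a, b} = carrier G"
    and am: "a [^] m = \<one>" and bn: "b [^] (2*n) = \<one>"
    and rel: "b \<otimes> a \<otimes> inv b = inv a"
    and cardG: "card (carrier G) = 2*m*n"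
begin

lemmas cc = mg_comm_cases[OF modd m2 n1 a b gen am bn rel cardG]
lemmas img = mg_img[OF modd m2 n1 a b gen am bn rel cardG]
lemmas inj = mg_inj[OF modd m2 n1 a b gen am bn rel cardG]

lemma mg_centre:
  assumes xm: "(x::nat) < m" and yn: "(y::nat) < 2*n"
  shows "a [^] x \<otimes> b [^] y \<in> grp_centre G \<longleftrightarrow> x = 0 \<and> even y"
proof
  assume c: "a [^] x \<otimes> b [^] y \<in> grp_centre G"
  have "(a [^] x \<otimes> b [^] y) \<otimes> (a [^] (1::nat) \<otimes> b [^] (0::nat)) = (a [^] (1::nat) \<otimes> b [^] (0::nat)) \<otimes> (a [^] x \<otimes> b [^] y)"
    using c a b unfolding grp_centre_def by simp
  then have ey: "even y" using cc[of x 1 y 0] xm m2 by auto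
  have "(a [^] x \<otimes> b [^] y) \<otimes> (a [^] (0::nat) \<otimes> b [^] (1::nat)) = (a [^] (0::nat) \<otimes> b [^] (1::nat)) \<otimes> (a [^] x \<otimes> b [^] y)"
    using c a b unfolding grp_centre_def by simp
  then have "x = 0" using cc[of x 0 y 1] xm m2 ey by auto
  then show "x = 0 \<and> even y" using ey by simp
next
  assume xy: "x = 0 \<and> even y"
  show "a [^] x \<otimes> b [^] y \<in> grp_centre G"
    unfolding grp_centre_def
  proof (intro CollectI conjI ballI)
    show "a [^] x \<otimes> b [^] y \<in> carrier G" using a b by simp
    fix w assume "w \<in> carrier G"
    then have "w \<in> (\<lambda>p::nat\<times>nat. a [^] fst p \<otimes> b [^] snd p) ` ({0..<m} \<times> {0..<2*n})" using img by simp
    then obtain p where p: "p \<in> {0..<m} \<times> {0..<2*n}" "w = a [^] fst p \<otimes> b [^] snd p" by (rule imageE)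
    define x' where "x' = fst p"
    define y' where "y' = snd p"
    have w: "w = a [^] x' \<otimes> b [^] y'" "x' < m" "y' < 2*n" using p unfolding x'_def y'_def by auto
    show "a [^] x \<otimes> b [^] y \<otimes> w = w \<otimes> (a [^] x \<otimes> b [^] y)"
      unfolding w(1) using cc[of x x' y y'] xy xm w by auto
  qed
qed

lemma main_cp:
  assumes f: "bij_betw f {0..<card (nc_vertices G)} (nc_vertices G)"
  shows "char_poly (nc_distance_matrix G f) =
      [:2, 1:] ^ (2 * m * n - (m + n) - 1)
    * [:- (real n - 2), 1:] ^ (m - 1)
    * [:- ((- (4 + real n - 3 * real m * real n) + real n * sqrt (5 * (real m)\<^sup>2 - 10 * real m + 9)) / 2), 1:]
    * [:- ((- (4 + real n - 3 * real m * real n) - real n * sqrt (5 * (real m)\<^sup>2 - 10 * real m + 9)) / 2), 1:]"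
proof -
  define V where "V = nc_vertices G"
  define B where "B = {0..<m} \<times> {0..<2*n}"
  define E where "E = (\<lambda>p::nat\<times>nat. a [^] fst p \<otimes> b [^] snd p)"
  define col where "col v = (case the_inv_into B E v of (x,y) \<Rightarrow> if even y then 0 else Suc x)" for v
  have injE: "inj_on E B" using inj unfolding E_def B_def .
  have imgE: "E ` B = carrier G" using img unfolding E_def B_def .
  have colE: "col (E p) = (if even (snd p) then 0 else Suc (fst p))" if "p \<in> B" for p
    using the_inv_into_f_f[OF injE that] unfolding col_def by (cases p) simp
  define I where "I = {p\<in>B. \<not> (fst p = 0 \<and> even (snd p))}"
  have VE: "V = E ` I"
  proof
    show "V \<subseteq> E ` I"
    proof
      fix v assume v: "v \<in> V"
      then have "v \<in> carrier G" "v \<notin> grp_centre G" unfolding V_def nc_vertices_def by auto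
      then obtain p where p: "p \<in> B" "v = E p" using imgE by blast
      then have "\<not> (fst p = 0 \<and> even (snd p))" using mg_centre[of "fst p" "snd p"] \<open>v \<notin> grp_centre G\<close>
        unfolding B_def E_def by auto
      then show "v \<in> E ` I" using p unfolding I_def by auto
    qed
    show "E ` I \<subseteq> V"
    proof
      fix v assume "v \<in> E ` I"
      then obtain p where p: "p \<in> B" "\<not> (fst p = 0 \<and> even (snd p))" "v = E p" unfolding I_def by blast
      then have "v \<in> carrier G" using imgE by auto
      moreover have "v \<notin> grp_centre G" using mg_centre[of "fst p" "snd p"] p unfolding B_def E_def by auto
      ultimately show "v \<in> V" unfolding V_def nc_vertices_def by auto
    qed
  qed
  have IB: "I \<subseteq> B" unfolding I_def by auto
  have commE: "E p \<otimes> E q = E q \<otimes> E p \<longleftrightarrow> col (E p) = col (E q)" if p: "p \<in> I" and q: "q \<in> I" for p q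
  proof -
    obtain x y where pxy: "p = (x,y)" by (cases p)
    obtain x' y' where qxy: "q = (x',y')" by (cases q)
    have xm: "x < m" "x' < m" using p q pxy qxy unfolding I_def B_def by auto
    have nz: "\<not> (x = 0 \<and> even y)" "\<not> (x' = 0 \<and> even y')" using p q pxy qxy unfolding I_def by auto
    have cp: "col (E p) = (if even y then 0 else Suc x)" "col (E q) = (if even y' then 0 else Suc x')"
      using colE p q IB pxy qxy by auto
    show ?thesis unfolding cp unfolding pxy qxy E_def using cc[OF xm, of y y'] nz by auto
  qed
  have adj: "nc_adj G u v \<longleftrightarrow> u \<in> V \<and> v \<in> V \<and> col u \<noteq> col v" for u v
  proof
    assume "nc_adj G u v"
    then have uv: "u \<in> V" "v \<in> V" "u \<otimes> v \<noteq> v \<otimes> u" unfolding nc_adj_def V_def by auto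
    then obtain p q where "p \<in> I" "q \<in> I" "u = E p" "v = E q" using VE by blast
    then show "u \<in> V \<and> v \<in> V \<and> col u \<noteq> col v" using uv commE by auto
  next
    assume uv: "u \<in> V \<and> v \<in> V \<and> col u \<noteq> col v"
    then obtain p q where "p \<in> I" "q \<in> I" "u = E p" "v = E q" using VE by blast
    then have "u \<otimes> v \<noteq> v \<otimes> u" using uv commE by auto
    then show "nc_adj G u v" using uv unfolding nc_adj_def V_def by auto
  qed
  define r where "r k = (if k = 0 then E (1,0) else E (k-1, 1))" for k
  have rI: "(if k = 0 then (1,0) else (k-1, 1)) \<in> I" if "k \<le> m" for k
    using that m2 n1 unfolding I_def B_def by auto
  have rV: "r k \<in> V" if "k \<le> m" for k using rI[OF that] VE unfolding r_def by (cases "k = 0") auto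
  have rc: "col (r k) = k" if "k \<le> m" for k
    using colE rI[OF that] IB unfolding r_def by (cases "k = 0") auto
  have colV: "col v \<le> m" if vV: "v \<in> V" for v
  proof -
    obtain p where "p \<in> I" "v = E p" using vV VE by blast
    then show ?thesis using colE IB unfolding I_def B_def by auto
  qed
  have other: "\<exists>w\<in>V. col w \<noteq> col u" if "u \<in> V" for u
  proof (cases "col u = 0")
    case True then show ?thesis using rV[of 1] rc[of 1] m2 by (intro bexI[of _ "r 1"]) auto
  next
    case False then show ?thesis using rV[of 0] rc[of 0] by (intro bexI[of _ "r 0"]) auto
  qed
  have dist: "nc_dist G u v = (if u = v then 0 else if col u = col v then 2 else 1)" if "u \<in> V" "v \<in> V" for u v
    by (rule nc_dist_formula[of G col], use adj other that in \<open>auto simp: V_def\<close>)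
  define Ev where "Ev = {y\<in>{0..<2*n}. even y}"
  define Od where "Od = {y\<in>{0..<2*n}. odd y}"
  have cEv: "card Ev = n"
  proof -
    have "Ev = (\<lambda>i. 2*i) ` {0..<n}" unfolding Ev_def by (auto elim!: evenE)
    then show ?thesis by (simp add: card_image inj_on_def)
  qed
  have cOd: "card Od = n"
  proof -
    have "Od = (\<lambda>i. 2*i+1) ` {0..<n}" unfolding Od_def by (auto elim!: oddE)
    then show ?thesis by (simp add: card_image inj_on_def)
  qed
  have finB: "finite B" unfolding B_def by simp
  have c0: "card {v\<in>V. col v = 0} = (m-1)*n"
  proof -
    have "{v\<in>V. col v = 0} = E ` ({1..<m} \<times> Ev)"
    proof
      show "{v\<in>V. col v = 0} \<subseteq> E ` ({1..<m} \<times> Ev)"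
      proof
        fix v assume "v \<in> {v\<in>V. col v = 0}"
        then obtain p where p: "p \<in> I" "v = E p" "col v = 0" using VE by blast
        then show "v \<in> E ` ({1..<m} \<times> Ev)" using colE[of p] IB
          unfolding I_def B_def Ev_def by (cases p) (auto split: if_splits)
      qed
      show "E ` ({1..<m} \<times> Ev) \<subseteq> {v\<in>V. col v = 0}"
      proof
        fix v assume "v \<in> E ` ({1..<m} \<times> Ev)"
        then obtain p where p: "p \<in> {1..<m} \<times> Ev" "v = E p" by blast
        then have pI: "p \<in> I" unfolding I_def B_def Ev_def by auto
        then show "v \<in> {v\<in>V. col v = 0}" using p colE[of p] IB VE unfolding Ev_def by auto
      qed
    qed
    moreover have "inj_on E ({1..<m} \<times> Ev)" by (rule inj_on_subset[OF injE], auto simp: B_def Ev_def)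
    ultimately show ?thesis using cEv by (simp add: card_image card_cartesian_product)
  qed
  have ck: "card {v\<in>V. col v = k} = n" if k: "1 \<le> k" "k \<le> m" for k
  proof -
    have "{v\<in>V. col v = k} = E ` ({k-1} \<times> Od)"
    proof
      show "{v\<in>V. col v = k} \<subseteq> E ` ({k-1} \<times> Od)"
      proof
        fix v assume "v \<in> {v\<in>V. col v = k}"
        then obtain p where p: "p \<in> I" "v = E p" "col v = k" using VE by blast
        then show "v \<in> E ` ({k-1} \<times> Od)" using colE[of p] IB k
          unfolding I_def B_def Od_def by (cases p) (auto split: if_splits)
      qed
      show "E ` ({k-1} \<times> Od) \<subseteq> {v\<in>V. col v = k}"
      proof
        fix v assume "v \<in> E ` ({k-1} \<times> Od)"
        then obtain p where p: "p \<in> {k-1} \<times> Od" "v = E p" by blast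
        then have pI: "p \<in> I" using k unfolding I_def B_def Od_def by auto
        then show "v \<in> {v\<in>V. col v = k}" using p colE[of p] IB VE k unfolding Od_def by auto
      qed
    qed
    moreover have "inj_on E ({k-1} \<times> Od)" by (rule inj_on_subset[OF injE], use k in \<open>auto simp: B_def Od_def\<close>)
    ultimately show ?thesis using cOd by (simp add: card_image card_cartesian_product)
  qed
  have finV: "finite V" using VE finB IB by (simp add: finite_subset)
  have cardV: "card V = 2*m*n - n"
  proof -
    have IB': "I = B - {0} \<times> Ev" unfolding I_def B_def Ev_def using m2 by auto
    have sub: "{0::nat} \<times> Ev \<subseteq> B" unfolding B_def Ev_def using m2 by auto
    have finE: "finite ({0::nat} \<times> Ev)" unfolding Ev_def by simp
    have "card I = card B - card ({0::nat} \<times> Ev)"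
      unfolding IB' using card_Diff_subset[OF finE sub] by simp
    also have "\<dots> = 2*m*n - n" using cEv by (simp add: B_def card_cartesian_product)
    finally have "card I = 2*m*n - n" .
    moreover have "card V = card I" unfolding VE by (rule card_image, rule inj_on_subset[OF injE IB])
    ultimately show ?thesis by simp
  qed
  have fV: "bij_betw f {0..<card V} V" using f V_def by simp
  have gc: "char_poly (mat (card V) (card V) (\<lambda>(i,j). real (nc_dist G (f i) (f j)))) =
    [: 2*((real m-1)*real n - 1) * (2*(real n-1) + (real m-1)*real n) - (real m-1)*real n * (real n + (real m-1)*real n),
     - (2*((real m-1)*real n - 1) + (2*(real n-1) + (real m-1)*real n)), 1:]
    * [:-(real n - 2),1:]^(m-1) * [:2,1:]^(card V - (m+1))"
    by (rule graph_charpoly[OF finV fV dist rV rc colV c0 ck m2 n1]) auto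
  have m2r: "real m > 2" using m2 by simp
  note fp = final_poly[OF m2r]
  have ndm: "nc_distance_matrix G f = mat (card V) (card V) (\<lambda>(i,j). real (nc_dist G (f i) (f j)))"
    unfolding nc_distance_matrix_def V_def ..
  have e: "card V - (m+1) = 2*m*n - (m+n) - 1" using cardV by simp
  show ?thesis unfolding ndm gc e fp by (simp only: mult_ac)
qed

end
end

theorem theorem6p1:
  fixes G :: "('a, 'b) monoid_scheme" and a b :: 'a and m n :: nat and f :: "nat \<Rightarrow> 'a"
  assumes "group G"
    and "odd m" and "m > 2" and "n \<ge> 1"
    and "a \<in> carrier G" and "b \<in> carrier G"
    and "generate G {a, b} = carrier G"
    and "a [^]\<^bsub>G\<^esub> m = \<one>\<^bsub>G\<^esub>"
    and "b [^]\<^bsub>G\<^esub> (2 * n) = \<one>\<^bsub>G\<^esub>"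
    and "b \<otimes>\<^bsub>G\<^esub> a \<otimes>\<^bsub>G\<^esub> inv\<^bsub>G\<^esub> b = inv\<^bsub>G\<^esub> a"
    and "card (carrier G) = 2 * m * n"
    and "bij_betw f {0..<card (nc_vertices G)} (nc_vertices G)"
  shows "char_poly (nc_distance_matrix G f) =
      [:2, 1:] ^ (2 * m * n - (m + n) - 1)
    * [:- (real n - 2), 1:] ^ (m - 1)
    * [:- ((- (4 + real n - 3 * real m * real n) + real n * sqrt (5 * (real m)\<^sup>2 - 10 * real m + 9)) / 2), 1:]
    * [:- ((- (4 + real n - 3 * real m * real n) - real n * sqrt (5 * (real m)\<^sup>2 - 10 * real m + 9)) / 2), 1:]"
  by (rule group.main_cp[OF assms])

end
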